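(* Let $C\in\mathbb{R}^{n\times n}$ be symmetric, $\rho>0$, and let $(\tilde\sigma^k,\sigma^k,y^k)$ be generated by the ADMM-BM algorithm described in the context, with Assumption A holding. Then for all $k\ge2$, $L_\rho(\tilde\sigma^k,\sigma^k,y^k)\ge -n\|C\|_\infty$.
   Context: $\langle A,B\rangle=\mathrm{Tr}(A^\top B)$, $\|\cdot\|_F$ Frobenius norm, $\|C\|_\infty=\max_i\sum_j|C_{ij}|$. For $\sigma\in\mathbb{R}^{n\times r}$, $\sigma_i$ is its $i$-th row; $\mathcal{M}=\{\sigma\in\mathbb{R}^{n\times r}:\|\sigma_i\|=1\ \forall i\}$. ADMM-BM with parameter $\rho$: choose $\tilde\sigma^0\in\mathcal{M}$, $\sigma^0=\tilde\sigma^0$, $y^0=C\tilde\sigma^0$. For $k=0,1,\dots$: $\gamma^k=\sigma^k-\frac1\rho(y^k+C\sigma^k)$ with rows $\gamma_i^k$; $\tilde\sigma^{k+1}_i=\gamma_i^k/\|\gamma_i^k\|$; $\sigma^{k+1}=\tilde\sigma^{k+1}+\frac1\rho(y^k-C\tilde\sigma^{k+1})$; $y^{k+1}=y^k+\rho(\tilde\sigma^{k+1}-\sigma^{k+1})$. Assumption A: $\gamma_i^k\neq0$ for all $i,k$. $L_\rho(\tilde\sigma,\sigma,y)=\langle C,\tilde\sigma\sigma^\top\rangle+\langle y,\tilde\sigma-\sigma\rangle+\frac\rho2\|\tilde\sigma-\sigma\|_F^2+\sum_i\mathcal{I}_{\{\|u\|=1\}}(\tilde\sigma_i)$, $\mathcal{I}_S$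 the indicator function of $S$. *)

theory Defs
  imports "HOL-Analysis.Analysis"
begin

text \<open>Matrices in R^{n x r} are represented as real^'r^'n (row i is s $ i).\<close>

definition frob_inner :: "real^'c^'m \<Rightarrow> real^'c^'m \<Rightarrow> real" where
  "frob_inner A B = (\<Sum>i\<in>UNIV. \<Sum>j\<in>UNIV. A $ i $ j * B $ i $ j)"

definition frob_norm :: "real^'c^'m \<Rightarrow> real" where
  "frob_norm A = sqrt (frob_inner A A)"

definition inf_norm :: "real^'n^'m \<Rightarrow> real" where
  "inf_norm C = Max (range (\<lambda>i. \<Sum>j\<in>UNIV. \<bar>C $ i $ j\<bar>))"

definition sphere_rows :: "(real^'r^'n) set" where
  "sphere_rows = {s. \<forall>i. norm (s $ i) = 1}"

definition L_rho :: "real \<Rightarrow> real^'n^'n \<Rightarrow> real^'r^'n \<Rightarrow> real^'r^'n \<Rightarrow> real^'r^'n \<Rightarrow> ereal" where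
  "L_rho \<rho> C st s y =
     (if st \<in> sphere_rows then
        ereal (frob_inner C (st ** transpose s) + frob_inner y (st - s)
               + \<rho> / 2 * (frob_norm (st - s))\<^sup>2)
      else \<infinity>)"

end

theory Submission
  imports Defs
begin

lemma key_identity:
  fixes C :: "real^'n^'n" and st s :: "real^'r^'n"
  assumes symC: "transpose C = C"
  shows "frob_inner C (st ** transpose s) + frob_inner (C ** st) (st - s)
         = (\<Sum>i\<in>UNIV. \<Sum>j\<in>UNIV. C $ i $ j * inner (st $ i) (st $ j))"
proof -
  have sym: "C $ i $ j = C $ j $ i" for i j
    using symC by (metis transpose_def vec_lambda_beta)
  have A: "frob_inner C (st ** transpose s) = (\<Sum>i\<in>UNIV. \<Sum>j\<in>UNIV. \<Sum>l\<in>UNIV. C $ i $ j * st $ i $ l * s $ j $ l)"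
    by (simp add: frob_inner_def matrix_matrix_mult_def transpose_def sum_distrib_left mult.assoc)
  have B: "frob_inner (C ** st) (st - s) = (\<Sum>i\<in>UNIV. \<Sum>l\<in>UNIV. \<Sum>m\<in>UNIV. C $ i $ m * st $ m $ l * st $ i $ l)
        - (\<Sum>i\<in>UNIV. \<Sum>l\<in>UNIV. \<Sum>m\<in>UNIV. C $ i $ m * st $ m $ l * s $ i $ l)"
    by (simp add: frob_inner_def matrix_matrix_mult_def sum_distrib_left sum_distrib_right
        right_diff_distrib sum_subtractf)
  have B2: "(\<Sum>i\<in>UNIV. \<Sum>l\<in>UNIV. \<Sum>m\<in>UNIV. C $ i $ m * st $ m $ l * s $ i $ l)
      = (\<Sum>i\<in>UNIV. \<Sum>j\<in>UNIV. \<Sum>l\<in>UNIV. C $ i $ j * st $ i $ l * s $ j $ l)"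
  proof -
    have "(\<Sum>i\<in>UNIV. \<Sum>l\<in>UNIV. \<Sum>m\<in>UNIV. C $ i $ m * st $ m $ l * s $ i $ l)
        = (\<Sum>i\<in>UNIV. \<Sum>m\<in>UNIV. \<Sum>l\<in>UNIV. C $ i $ m * st $ m $ l * s $ i $ l)"
      by (intro sum.cong refl) (rule sum.swap)
    also have "\<dots> = (\<Sum>m\<in>UNIV. \<Sum>i\<in>UNIV. \<Sum>l\<in>UNIV. C $ i $ m * st $ m $ l * s $ i $ l)"
      by (rule sum.swap)
    also have "\<dots> = (\<Sum>i\<in>UNIV. \<Sum>j\<in>UNIV. \<Sum>l\<in>UNIV. C $ i $ j * st $ i $ l * s $ j $ l)"
      using sym by simp
    finally show ?thesis .
  qed
  have B1: "(\<Sum>i\<in>UNIV. \<Sum>l\<in>UNIV. \<Sum>m\<in>UNIV. C $ i $ m * st $ m $ l * st $ i $ l)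
      = (\<Sum>i\<in>UNIV. \<Sum>j\<in>UNIV. C $ i $ j * inner (st $ i) (st $ j))"
  proof -
    have "(\<Sum>i\<in>UNIV. \<Sum>l\<in>UNIV. \<Sum>m\<in>UNIV. C $ i $ m * st $ m $ l * st $ i $ l)
        = (\<Sum>i\<in>UNIV. \<Sum>m\<in>UNIV. \<Sum>l\<in>UNIV. C $ i $ m * st $ m $ l * st $ i $ l)"
      by (intro sum.cong refl) (rule sum.swap)
    also have "\<dots> = (\<Sum>i\<in>UNIV. \<Sum>j\<in>UNIV. C $ i $ j * inner (st $ i) (st $ j))"
      unfolding inner_vec_def sum_distrib_left by (intro sum.cong refl) (simp add: mult.assoc mult.commute)
    finally show ?thesis .
  qed
  show ?thesis using A B B1 B2 by simp
qed

lemma lower_bound: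
  fixes C :: "real^'n^'n" and st :: "real^'r^'n"
  assumes "st \<in> sphere_rows"
  shows "(\<Sum>i\<in>UNIV. \<Sum>j\<in>UNIV. C $ i $ j * inner (st $ i) (st $ j)) \<ge> - real CARD('n) * inf_norm C"
proof -
  have nr: "norm (st $ i) = 1" for i using assms by (simp add: sphere_rows_def)
  have t: "C $ i $ j * inner (st $ i) (st $ j) \<ge> - \<bar>C $ i $ j\<bar>" for i j
  proof -
    have "\<bar>inner (st $ i) (st $ j)\<bar> \<le> 1"
      using Cauchy_Schwarz_ineq2[of "st $ i" "st $ j"] nr by simp
    then have "\<bar>C $ i $ j * inner (st $ i) (st $ j)\<bar> \<le> \<bar>C $ i $ j\<bar>"
      by (simp add: abs_mult mult_left_le)
    then show ?thesis by linarith
  qed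
  have r: "(\<Sum>j\<in>UNIV. \<bar>C $ i $ j\<bar>) \<le> inf_norm C" for i
    unfolding inf_norm_def by (rule Max_ge) auto
  have "(\<Sum>i\<in>UNIV. \<Sum>j\<in>UNIV. C $ i $ j * inner (st $ i) (st $ j))
       \<ge> (\<Sum>i\<in>UNIV. - (\<Sum>j\<in>UNIV. \<bar>C $ i $ j\<bar>))"
    by (rule sum_mono) (simp add: sum_negf[symmetric] sum_mono t)
  moreover have "(\<Sum>i\<in>UNIV. - (\<Sum>j\<in>UNIV. \<bar>C $ i $ j\<bar>)) \<ge> (\<Sum>i\<in>(UNIV::'n set). - inf_norm C)"
    by (rule sum_mono) (simp add: r)
  ultimately show ?thesis by simp
qed

theorem lemma4:
  fixes C :: "real^'n^'n" and \<rho> :: real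
    and st s y :: "nat \<Rightarrow> real^'r^'n"
    and \<gamma> :: "nat \<Rightarrow> real^'r^'n"
  assumes symC: "transpose C = C"
    and rho_pos: "\<rho> > 0"
    and init_M: "st 0 \<in> sphere_rows"
    and init_s: "s 0 = st 0"
    and init_y: "y 0 = C ** st 0"
    and gamma_def: "\<And>k. \<gamma> k = s k - (1/\<rho>) *\<^sub>R (y k + C ** s k)"
    and st_step: "\<And>k i. st (Suc k) $ i = (1 / norm (\<gamma> k $ i)) *\<^sub>R (\<gamma> k $ i)"
    and s_step: "\<And>k. s (Suc k) = st (Suc k) + (1/\<rho>) *\<^sub>R (y k - C ** st (Suc k))"
    and y_step: "\<And>k. y (Suc k) = y k + \<rho> *\<^sub>R (st (Suc k) - s (Suc k))"
    and assumpA: "\<And>k i. \<gamma> k $ i \<noteq> 0"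
    and k2: "k \<ge> 2"
  shows "L_rho \<rho> C (st k) (s k) (y k) \<ge> ereal (- real CARD('n) * inf_norm C)"
proof -
  have yk: "y k = C ** st k" for k
  proof (cases k)
    case 0 then show ?thesis using init_y by simp
  next
    case (Suc m)
    have "y (Suc m) = y m + \<rho> *\<^sub>R (st (Suc m) - s (Suc m))" by (rule y_step)
    also have "\<dots> = y m - \<rho> *\<^sub>R ((1/\<rho>) *\<^sub>R (y m - C ** st (Suc m)))"
      by (simp add: s_step)
    also have "\<dots> = C ** st (Suc m)" using rho_pos by simp
    finally show ?thesis using Suc by simp
  qed
  have stk: "st k \<in> sphere_rows" for k
  proof (cases k)
    case 0 then show ?thesis using init_M by simp
  next
    case (Suc m)
    show ?thesis unfolding sphere_rows_def using Suc st_step assumpA by simp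
  qed
  have nn: "\<rho> / 2 * (frob_norm (st k - s k))\<^sup>2 \<ge> 0" using rho_pos by simp
  have "frob_inner C (st k ** transpose (s k)) + frob_inner (y k) (st k - s k)
        \<ge> - real CARD('n) * inf_norm C"
    using key_identity[OF symC, of "st k" "s k"] lower_bound[OF stk[of k], of C] yk[of k] by simp
  then show ?thesis unfolding L_rho_def using stk[of k] nn by simp
qed

end
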